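(* In $X=(\mathbb{R}^2,\|\cdot\|_\infty)$ let $A=\{(x,y):x>0,\ y\ge 1/x\}$ and $B=\{(x,y):x>-1,\ y\le \frac{1}{x+1}-1\}$. Then $\mathrm{dist}(A,B)=1$, the ordered pair $(A,B)$ has the $BUC$ property, and $(A,B)$ does not have the $UC$ property.
   Context: $\|(x,y)\|_\infty=\max\{|x|,|y|\}$; $\mathrm{dist}(A,B)=\inf\{\|a-b\|_\infty:a\in A,b\in B\}$. The ordered pair $(A,B)$ has the $UC$ property if for all sequences $\{x_n\},\{z_n\}\subset A$, $\{y_n\}\subset B$ with $\lim_n\|x_n-y_n\|=\lim_n\|z_n-y_n\|=\mathrm{dist}(A,B)$ one has $\lim_n\|x_n-z_n\|=0$. It has the bounded $UC$ property ($BUC$) if the same implication holds whenever in addition $\{x_n\}$ and $\{z_n\}$ are bounded. *)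

theory Defs
  imports "HOL-Analysis.Analysis"
begin

definition norm_inf :: "real \<times> real \<Rightarrow> real" where
  "norm_inf p = max \<bar>fst p\<bar> \<bar>snd p\<bar>"

definition dist_inf :: "real \<times> real \<Rightarrow> real \<times> real \<Rightarrow> real" where
  "dist_inf p q = norm_inf (fst p - fst q, snd p - snd q)"

definition set_dist_inf :: "(real \<times> real) set \<Rightarrow> (real \<times> real) set \<Rightarrow> real" where
  "set_dist_inf A B = Inf {dist_inf a b | a b. a \<in> A \<and> b \<in> B}"

definition UC_prop :: "(real \<times> real) set \<Rightarrow> (real \<times> real) set \<Rightarrow> bool" where
  "UC_prop A B \<longleftrightarrow>
     (\<forall>x z y. (\<forall>n. x n \<in> A) \<and> (\<forall>n. z n \<in> A) \<and> (\<forall>n. y n \<in> B) \<and>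
        (\<lambda>n. dist_inf (x n) (y n)) \<longlonglongrightarrow> set_dist_inf A B \<and>
        (\<lambda>n. dist_inf (z n) (y n)) \<longlonglongrightarrow> set_dist_inf A B
        \<longrightarrow> (\<lambda>n. dist_inf (x n) (z n)) \<longlonglongrightarrow> 0)"

definition bounded_seq_inf :: "(nat \<Rightarrow> real \<times> real) \<Rightarrow> bool" where
  "bounded_seq_inf x \<longleftrightarrow> (\<exists>M. \<forall>n. norm_inf (x n) \<le> M)"

definition BUC_prop :: "(real \<times> real) set \<Rightarrow> (real \<times> real) set \<Rightarrow> bool" where
  "BUC_prop A B \<longleftrightarrow>
     (\<forall>x z y. (\<forall>n. x n \<in> A) \<and> (\<forall>n. z n \<in> A) \<and> (\<forall>n. y n \<in> B) \<and>
        bounded_seq_inf x \<and> bounded_seq_inf z \<and>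
        (\<lambda>n. dist_inf (x n) (y n)) \<longlonglongrightarrow> set_dist_inf A B \<and>
        (\<lambda>n. dist_inf (z n) (y n)) \<longlonglongrightarrow> set_dist_inf A B
        \<longrightarrow> (\<lambda>n. dist_inf (x n) (z n)) \<longlonglongrightarrow> 0)"

end

theory Submission
  imports Defs
begin

lemma distA_B_ge:
  fixes a b p q :: real
  assumes a: "a > 0" "a * b \<ge> 1" and p: "p > 0" "p * q \<le> 1"
  shows "max \<bar>a - (p - 1)\<bar> \<bar>b - (q - 1)\<bar> \<ge> 1"
proof (rule ccontr)
  assume "\<not> ?thesis"
  hence "\<bar>a - (p - 1)\<bar> < 1" "\<bar>b - (q - 1)\<bar> < 1" by auto
  hence h: "a < p" "b < q" by (auto simp: abs_less_iff)
  have b0: "b > 0" using a zero_less_mult_pos[of a b] by linarith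
  have "a * b < p * q" using h a b0 p by (intro mult_strict_mono) auto
  thus False using a p by linarith
qed

lemma key_bound:
  fixes a b p q M \<delta> :: real
  assumes a: "a > 0" "b > 0" "a * b \<ge> 1" "a \<le> M" "b \<le> M"
    and p: "p * q \<le> 1"
    and d: "a \<le> p + \<delta>" "b \<le> q + \<delta>" "0 \<le> \<delta>" "\<delta> \<le> 1 / (2*M)"
  shows "\<bar>a - 1/q\<bar> \<le> (4*M^2+1)*\<delta>"
proof -
  have M0: "M > 0" using a by linarith
  have "b \<ge> 1/a" using a by (simp add: field_simps)
  moreover have "1/a \<ge> 1/M" using a by (simp add: frac_le)
  ultimately have bM: "b \<ge> 1/M" by linarith
  have "1/M - 1/(2*M) = 1/(2*M)" using M0 by (simp add: field_simps)
  hence q0: "q \<ge> 1/(2*M)" using bM d by linarith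
  have qpos: "q > 0" using q0 M0 by (smt (verit) divide_pos_pos)
  have "p \<le> 1/q" using p qpos by (simp add: field_simps mult.commute)
  hence up: "a - 1/q \<le> \<delta>" using d by linarith
  have "a \<ge> 1/b" using a by (simp add: field_simps)
  moreover have "1/b \<ge> 1/(q+\<delta>)" using a d qpos by (simp add: frac_le)
  ultimately have lo: "a \<ge> 1/(q+\<delta>)" by linarith
  have eq: "1/q - 1/(q+\<delta>) = \<delta> / (q*(q+\<delta>))" using qpos d by (simp add: field_simps)
  have "q*q \<le> q*(q+\<delta>)" using qpos d by (simp add: mult_left_mono)
  moreover have "q*q \<ge> (1/(2*M))*(1/(2*M))" using q0 M0 qpos
    by (intro mult_mono) auto
  moreover have "(1/(2*M))*(1/(2*M)) = 1/(4*M^2)" using M0 by (simp add: field_simps power2_eq_square)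
  ultimately have qq: "q*(q+\<delta>) \<ge> 1/(4*M^2)" by linarith
  have "\<delta> / (q*(q+\<delta>)) \<le> \<delta> / (1/(4*M^2))"
    using qq d M0 qpos by (intro divide_left_mono) (auto intro!: mult_pos_pos)
  also have "\<dots> = 4*M^2*\<delta>" using M0 by simp
  finally have "1/q - a \<le> 4*M^2*\<delta>" using eq lo by linarith
  moreover have "\<delta> \<le> (4*M^2+1)*\<delta>" using d by (simp add: algebra_simps)
  moreover have "4*M^2*\<delta> \<le> (4*M^2+1)*\<delta>" using d by (simp add: algebra_simps)
  ultimately show ?thesis using up by linarith
qed


lemma close_pt:
  fixes a b u v M \<delta> :: real
  assumes A: "a > 0" "b \<ge> 1/a" and B: "u > -1" "v \<le> 1/(u+1) - 1"
    and bd: "max \<bar>a\<bar> \<bar>b\<bar> \<le> M"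
    and dd: "max \<bar>a - u\<bar> \<bar>b - v\<bar> < 1 + \<delta>"
    and d: "0 \<le> \<delta>" "\<delta> \<le> 1/(2*M)"
  shows "\<bar>a - 1/(v+1)\<bar> \<le> (4*M^2+1)*\<delta> \<and> \<bar>b - 1/(u+1)\<bar> \<le> (4*M^2+1)*\<delta>"
proof -
  have ab: "a * b \<ge> 1" using A by (simp add: field_simps)
  have b0: "b > 0" using A ab zero_less_mult_pos[of a b] by linarith
  have aM: "a \<le> M" "b \<le> M" using bd by auto
  have pq: "(u+1)*(v+1) \<le> 1" using B
    by (simp add: field_simps)
  have le: "a \<le> (u+1) + \<delta>" "b \<le> (v+1) + \<delta>" using dd by auto
  have 1: "\<bar>a - 1/(v+1)\<bar> \<le> (4*M^2+1)*\<delta>"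
    by (rule key_bound[OF A(1) b0 ab aM pq le d])
  have 2: "\<bar>b - 1/(u+1)\<bar> \<le> (4*M^2+1)*\<delta>"
    by (rule key_bound[OF b0 A(1) _ aM(2) aM(1) _ le(2) le(1) d]) (use ab pq in \<open>auto simp: mult.commute\<close>)
  show ?thesis using 1 2 by auto
qed


lemma dist_ge1:
  assumes "a \<in> {(x, y). x > 0 \<and> y \<ge> 1 / x}" "b \<in> {(x, y). x > -1 \<and> y \<le> 1 / (x + 1) - 1}"
  shows "dist_inf a b \<ge> 1"
proof -
  obtain a1 a2 b1 b2 where e: "a = (a1,a2)" "b = (b1,b2)" by fastforce
  have "a1 > 0" "a2 \<ge> 1/a1" "b1 > -1" "b2 \<le> 1/(b1+1) - 1" using assms e by auto
  hence "a1 * a2 \<ge> 1" "(b1+1)*(b2+1) \<le> 1" by (auto simp: field_simps)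
  from distA_B_ge[OF \<open>a1 > 0\<close> this(1) _ this(2)] \<open>b1 > -1\<close>
  show ?thesis unfolding e dist_inf_def norm_inf_def by (simp add: algebra_simps)
qed

theorem mainTheorem16:
  fixes A B :: "(real \<times> real) set"
  assumes "A = {(x, y). x > 0 \<and> y \<ge> 1 / x}"
      and "B = {(x, y). x > -1 \<and> y \<le> 1 / (x + 1) - 1}"
  shows "set_dist_inf A B = 1 \<and> BUC_prop A B \<and> \<not> UC_prop A B"
proof -
  have D: "set_dist_inf A B = 1"
    unfolding set_dist_inf_def
  proof (rule cInf_eq_minimum)
    show "1 \<in> {dist_inf a b |a b. a \<in> A \<and> b \<in> B}"
    proof -
      have "dist_inf (1,1) (0,0) = 1" "((1::real),(1::real)) \<in> A" "((0::real),(0::real)) \<in> B"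
        using assms by (auto simp: dist_inf_def norm_inf_def)
      thus ?thesis by (smt (verit) mem_Collect_eq)
    qed
    show "\<And>x. x \<in> {dist_inf a b |a b. a \<in> A \<and> b \<in> B} \<Longrightarrow> 1 \<le> x"
      using dist_ge1 assms by blast
  qed
  have BUC: "BUC_prop A B"
    unfolding BUC_prop_def D
  proof (intro allI impI, elim conjE)
    fix x z y :: "nat \<Rightarrow> real \<times> real"
    assume xA: "\<forall>n. x n \<in> A" and zA: "\<forall>n. z n \<in> A" and yB: "\<forall>n. y n \<in> B"
      and bx: "bounded_seq_inf x" and bz: "bounded_seq_inf z"
      and lx: "(\<lambda>n. dist_inf (x n) (y n)) \<longlonglongrightarrow> 1"
      and lz: "(\<lambda>n. dist_inf (z n) (y n)) \<longlonglongrightarrow> 1"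
    obtain Mx Mz where Mx: "\<forall>n. norm_inf (x n) \<le> Mx" and Mz: "\<forall>n. norm_inf (z n) \<le> Mz"
      using bx bz unfolding bounded_seq_inf_def by blast
    define M where "M = max 1 (max Mx Mz)"
    have M1: "M \<ge> 1" unfolding M_def by simp
    have Mxn: "norm_inf (x n) \<le> M" "norm_inf (z n) \<le> M" for n
      using Mx Mz unfolding M_def by (smt (verit))+
    define C where "C = 4*M^2+1"
    have C0: "C > 0" proof -
      have "M^2 \<ge> 0" by simp
      thus ?thesis unfolding C_def by linarith
    qed
    show "(\<lambda>n. dist_inf (x n) (z n)) \<longlonglongrightarrow> 0"
    proof (rule LIMSEQ_I)
      fix r :: real assume r: "r > 0"
      define \<delta> where "\<delta> = min (1/(2*M)) (r/(4*C))"
      have d0: "\<delta> > 0" unfolding \<delta>_def using r C0 M1 by simp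
      have dM: "\<delta> \<le> 1/(2*M)" unfolding \<delta>_def by simp
      have dr: "2*C*\<delta> < r"
      proof -
        have "2*C*\<delta> \<le> 2*C*(r/(4*C))" unfolding \<delta>_def using C0 by (intro mult_left_mono) auto
        also have "\<dots> = r/2" using C0 by simp
        finally show ?thesis using r by linarith
      qed
      obtain n1 where n1: "\<forall>n\<ge>n1. norm (dist_inf (x n) (y n) - 1) < \<delta>"
        using LIMSEQ_D[OF lx d0] by blast
      obtain n2 where n2: "\<forall>n\<ge>n2. norm (dist_inf (z n) (y n) - 1) < \<delta>"
        using LIMSEQ_D[OF lz d0] by blast
      have "\<forall>n\<ge>max n1 n2. norm (dist_inf (x n) (z n) - 0) < r"
      proof (intro allI impI)
        fix n assume n: "n \<ge> max n1 n2"
        obtain a b where xe: "x n = (a,b)" by fastforce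
        obtain a' b' where ze: "z n = (a',b')" by fastforce
        obtain u v where ye: "y n = (u,v)" by fastforce
        have h1: "max \<bar>a - u\<bar> \<bar>b - v\<bar> < 1 + \<delta>"
          using n1 n xe ye unfolding dist_inf_def norm_inf_def by auto
        have h2: "max \<bar>a' - u\<bar> \<bar>b' - v\<bar> < 1 + \<delta>"
          using n2 n ze ye unfolding dist_inf_def norm_inf_def by auto
        have m1: "a > 0" "b \<ge> 1/a" using xA xe assms by (metis (mono_tags, lifting) case_prodD mem_Collect_eq)+
        have m2: "a' > 0" "b' \<ge> 1/a'" using zA ze assms by (metis (mono_tags, lifting) case_prodD mem_Collect_eq)+
        have m3: "u > -1" "v \<le> 1/(u+1) - 1" using yB ye assms by (metis (mono_tags, lifting) case_prodD mem_Collect_eq)+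
        have bd1: "max \<bar>a\<bar> \<bar>b\<bar> \<le> M" using Mxn(1)[of n] xe unfolding norm_inf_def by simp
        have bd2: "max \<bar>a'\<bar> \<bar>b'\<bar> \<le> M" using Mxn(2)[of n] ze unfolding norm_inf_def by simp
        note c1 = close_pt[OF m1 m3 bd1 h1 less_imp_le[OF d0] dM, folded C_def] close_pt[OF m2 m3 bd2 h2 less_imp_le[OF d0] dM, folded C_def]
        hence "\<bar>a - a'\<bar> \<le> 2*C*\<delta>" "\<bar>b - b'\<bar> \<le> 2*C*\<delta>" using d0 by auto
        thus "norm (dist_inf (x n) (z n) - 0) < r"
          using dr xe ze unfolding dist_inf_def norm_inf_def by auto
      qed
      thus "\<exists>no. \<forall>n\<ge>no. norm (dist_inf (x n) (z n) - 0) < r" by blast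
    qed
  qed
  have UC: "\<not> UC_prop A B"
  proof
    assume U: "UC_prop A B"
    define x where "x = (\<lambda>n::nat. (real (Suc n), 1 / real (Suc n)))"
    define z where "z = (\<lambda>n::nat. (real (Suc (Suc n)), 1 / real (Suc (Suc n))))"
    define y where "y = (\<lambda>n::nat. (real (Suc n), 1 / real (Suc (Suc n)) - 1))"
    have xA: "\<forall>n. x n \<in> A" and zA: "\<forall>n. z n \<in> A" using assms unfolding x_def z_def by auto
    have yB: "\<forall>n. y n \<in> B" using assms unfolding y_def by (auto simp: add.commute)
    have L1: "(\<lambda>n. 1 / real (Suc n)) \<longlonglongrightarrow> 0"
      using LIMSEQ_inverse_real_of_nat by (simp add: inverse_eq_divide)
    have L2: "(\<lambda>n. 1 / real (Suc (Suc n))) \<longlonglongrightarrow> 0"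
      using LIMSEQ_Suc[OF L1] by simp
    have "(\<lambda>n. 1 + (1 / real (Suc n) - 1 / real (Suc (Suc n)))) \<longlonglongrightarrow> 1 + (0 - 0)"
      by (intro tendsto_intros L1 L2)
    moreover have "dist_inf (x n) (y n) = 1 + (1 / real (Suc n) - 1 / real (Suc (Suc n)))" for n
    proof -
      have "1 / real (Suc (Suc n)) \<le> 1 / real (Suc n)" by (simp add: frac_le)
      thus ?thesis unfolding x_def y_def dist_inf_def norm_inf_def by auto
    qed
    ultimately have lx: "(\<lambda>n. dist_inf (x n) (y n)) \<longlonglongrightarrow> 1" by simp
    have lz: "(\<lambda>n. dist_inf (z n) (y n)) \<longlonglongrightarrow> 1"
      unfolding z_def y_def dist_inf_def norm_inf_def by simp
    have lim0: "(\<lambda>n. dist_inf (x n) (z n)) \<longlonglongrightarrow> 0"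
      using U xA zA yB lx lz unfolding UC_prop_def D by blast
    have "\<forall>n\<ge>0. 1 \<le> dist_inf (x n) (z n)"
      unfolding x_def z_def dist_inf_def norm_inf_def by simp
    hence "(1::real) \<le> 0" using LIMSEQ_le_const[OF lim0] by blast
    thus False by simp
  qed
  show ?thesis using D BUC UC by blast
qed

end
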